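(* Let $G$ be a connected $(2K_2, K_1+C_4)$-free graph. Then either $G$ is a pseudo-split graph, or there exists a partition $(V_1,\dots,V_6)$ of $V(G)$ (parts possibly empty) such that $V_i$ is an independent set for each $i\in\{2,\dots,6\}$, and moreover one of the following holds: (a) $G[V_1]$ is a pseudo-split graph with $\omega(G[V_1])\le \omega(G)-1$, and $V_5=V_6=\emptyset$; or (b) $G[V_1]$ is isomorphic to the complement of a bipartite graph.
   Context: All graphs are finite, simple and undirected. $C_n$, $K_n$ denote the cycle and complete graph on $n$ vertices; $2K_2$ is the disjoint union of two copies of $K_2$; $G_1+G_2$ denotes the join (disjoint union plus all edges between them), so $K_1+C_4$ is the wheel with a center adjacent to all vertices of a $4$-cycle. A graph is $\mathcal F$-free if it has no induced subgraph isomorphic to a member of $\mathcal F$. A pseudo-split graph is a $(2K_2, C_4)$-free graph. $G[S]$ is the subgraph induced by $S$; $\omega$ denotes clique number. *)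

theory Defs
  imports Main
begin

definition graph :: "'a set \<Rightarrow> ('a \<Rightarrow> 'a \<Rightarrow> bool) \<Rightarrow> bool" where
  "graph V E \<longleftrightarrow> finite V \<and> (\<forall>x y. E x y \<longrightarrow> x \<in> V \<and> y \<in> V)
     \<and> (\<forall>x y. E x y \<longrightarrow> E y x) \<and> (\<forall>x. \<not> E x x)"

definition induced_edges :: "('a \<Rightarrow> 'a \<Rightarrow> bool) \<Rightarrow> 'a set \<Rightarrow> 'a \<Rightarrow> 'a \<Rightarrow> bool" where
  "induced_edges E S = (\<lambda>x y. E x y \<and> x \<in> S \<and> y \<in> S)"

definition has_induced :: "'b set \<Rightarrow> ('b \<Rightarrow> 'b \<Rightarrow> bool) \<Rightarrow> 'a set \<Rightarrow> ('a \<Rightarrow> 'a \<Rightarrow> bool) \<Rightarrow> bool" where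
  "has_induced HV HE V E \<longleftrightarrow> (\<exists>f. inj_on f HV \<and> f ` HV \<subseteq> V \<and>
      (\<forall>x\<in>HV. \<forall>y\<in>HV. E (f x) (f y) \<longleftrightarrow> HE x y))"

definition twoK2_V :: "nat set" where "twoK2_V = {0,1,2,3}"
definition twoK2_E :: "nat \<Rightarrow> nat \<Rightarrow> bool" where
  "twoK2_E x y \<longleftrightarrow> {x,y} = {0,1} \<or> {x,y} = {2,3}"

definition C4_V :: "nat set" where "C4_V = {0,1,2,3}"
definition C4_E :: "nat \<Rightarrow> nat \<Rightarrow> bool" where
  "C4_E x y \<longleftrightarrow> {x,y} = {0,1} \<or> {x,y} = {1,2} \<or> {x,y} = {2,3} \<or> {x,y} = {3,0}"

text \<open>K1 + C4: the wheel, centre 4 joined to the 4-cycle 0-1-2-3-0.\<close>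
definition W4_V :: "nat set" where "W4_V = {0,1,2,3,4}"
definition W4_E :: "nat \<Rightarrow> nat \<Rightarrow> bool" where
  "W4_E x y \<longleftrightarrow> C4_E x y \<or> (x = 4 \<and> y \<in> {0,1,2,3}) \<or> (y = 4 \<and> x \<in> {0,1,2,3})"

definition pseudo_split :: "'a set \<Rightarrow> ('a \<Rightarrow> 'a \<Rightarrow> bool) \<Rightarrow> bool" where
  "pseudo_split V E \<longleftrightarrow> \<not> has_induced twoK2_V twoK2_E V E \<and> \<not> has_induced C4_V C4_E V E"

definition connected_graph :: "'a set \<Rightarrow> ('a \<Rightarrow> 'a \<Rightarrow> bool) \<Rightarrow> bool" where
  "connected_graph V E \<longleftrightarrow> V \<noteq> {} \<and> (\<forall>u\<in>V. \<forall>v\<in>V. E\<^sup>*\<^sup>* u v)"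

definition clique :: "('a \<Rightarrow> 'a \<Rightarrow> bool) \<Rightarrow> 'a set \<Rightarrow> bool" where
  "clique E K \<longleftrightarrow> (\<forall>x\<in>K. \<forall>y\<in>K. x \<noteq> y \<longrightarrow> E x y)"

definition independent :: "('a \<Rightarrow> 'a \<Rightarrow> bool) \<Rightarrow> 'a set \<Rightarrow> bool" where
  "independent E S \<longleftrightarrow> (\<forall>x\<in>S. \<forall>y\<in>S. \<not> E x y)"

definition clique_number :: "'a set \<Rightarrow> ('a \<Rightarrow> 'a \<Rightarrow> bool) \<Rightarrow> nat" where
  "clique_number V E = Max {card K | K. K \<subseteq> V \<and> clique E K}"

definition complement :: "'a set \<Rightarrow> ('a \<Rightarrow> 'a \<Rightarrow> bool) \<Rightarrow> 'a \<Rightarrow> 'a \<Rightarrow> bool" where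
  "complement V E = (\<lambda>x y. x \<in> V \<and> y \<in> V \<and> x \<noteq> y \<and> \<not> E x y)"

definition bipartite :: "'a set \<Rightarrow> ('a \<Rightarrow> 'a \<Rightarrow> bool) \<Rightarrow> bool" where
  "bipartite V E \<longleftrightarrow> (\<exists>A B. A \<union> B = V \<and> A \<inter> B = {} \<and> independent E A \<and> independent E B)"

end

theory Submission
  imports Defs
begin

lemma no2K2:
  assumes g: "graph V E" and h: "\<not> has_induced twoK2_V twoK2_E V E"
    and v: "x \<in> V" "y \<in> V" "z \<in> V" "w \<in> V"
    and e: "E x y" "E z w" "\<not> E x z" "\<not> E x w" "\<not> E y z" "\<not> E y w"
  shows False
proof -
  have sym: "\<And>a b. E a b \<Longrightarrow> E b a" and irr: "\<And>a. \<not> E a a" using g unfolding graph_def by blast+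
  define f where "f = (\<lambda>i::nat. if i = 0 then x else if i = 1 then y else if i = 2 then z else w)"
  have d: "x \<noteq> y" "x \<noteq> z" "x \<noteq> w" "y \<noteq> z" "y \<noteq> w" "z \<noteq> w"
    using e irr sym by metis+
  have "has_induced twoK2_V twoK2_E V E"
    unfolding has_induced_def
  proof (intro exI conjI)
    show "inj_on f twoK2_V" unfolding inj_on_def twoK2_V_def f_def using d by auto
    show "f ` twoK2_V \<subseteq> V" unfolding twoK2_V_def f_def using v by auto
    show "\<forall>a\<in>twoK2_V. \<forall>b\<in>twoK2_V. E (f a) (f b) = twoK2_E a b"
      unfolding twoK2_V_def f_def twoK2_E_def using e sym[OF e(1)] sym[OF e(2)] irr by (simp add: doubleton_eq_iff; metis sym)
  qed
  thus False using h by blast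
qed

lemma noW4:
  assumes g: "graph V E" and h: "\<not> has_induced W4_V W4_E V E"
    and v: "x \<in> V" "y \<in> V" "z \<in> V" "w \<in> V" "c \<in> V"
    and e: "E x y" "E y z" "E z w" "E w x" "\<not> E x z" "\<not> E y w" "x \<noteq> z" "y \<noteq> w"
    and ce: "E c x" "E c y" "E c z" "E c w"
  shows False
proof -
  have sym: "\<And>a b. E a b \<Longrightarrow> E b a" and irr: "\<And>a. \<not> E a a" using g unfolding graph_def by blast+
  define f where "f = (\<lambda>i::nat. if i = 0 then x else if i = 1 then y else if i = 2 then z else if i = 3 then w else c)"
  have d: "x \<noteq> y" "x \<noteq> w" "y \<noteq> z" "z \<noteq> w" "c \<noteq> x" "c \<noteq> y" "c \<noteq> z" "c \<noteq> w"
    using e ce irr sym by metis+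
  have "has_induced W4_V W4_E V E"
    unfolding has_induced_def
  proof (intro exI conjI)
    show "inj_on f W4_V" unfolding inj_on_def W4_V_def f_def using d e by auto
    show "f ` W4_V \<subseteq> V" unfolding W4_V_def f_def using v by auto
    show "\<forall>a\<in>W4_V. \<forall>b\<in>W4_V. E (f a) (f b) = W4_E a b"
      unfolding W4_V_def f_def W4_E_def C4_E_def using e ce sym[OF e(1)] sym[OF e(2)] sym[OF e(3)] sym[OF e(4)] sym[OF ce(1)] sym[OF ce(2)] sym[OF ce(3)] sym[OF ce(4)] irr by (simp add: doubleton_eq_iff; metis sym)
  qed
  thus False using h by blast
qed


lemma cover3:
  assumes g: "graph V E" and SV: "S \<subseteq> V"
    and n2: "\<And>x y z w. x\<in>S \<Longrightarrow> y\<in>S \<Longrightarrow> z\<in>S \<Longrightarrow> w\<in>S \<Longrightarrow> E x y \<Longrightarrow> E z w \<Longrightarrow>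
               \<not> E x z \<Longrightarrow> \<not> E x w \<Longrightarrow> \<not> E y z \<Longrightarrow> \<not> E y w \<Longrightarrow> False"
    and n4: "\<And>x y z w. x\<in>S \<Longrightarrow> y\<in>S \<Longrightarrow> z\<in>S \<Longrightarrow> w\<in>S \<Longrightarrow> E x y \<Longrightarrow> E y z \<Longrightarrow> E z w \<Longrightarrow> E w x \<Longrightarrow>
               \<not> E x z \<Longrightarrow> \<not> E y w \<Longrightarrow> x \<noteq> z \<Longrightarrow> y \<noteq> w \<Longrightarrow> False"
  shows "\<exists>K I J. S = K \<union> I \<union> J \<and> clique E K \<and> independent E I \<and> independent E J"
proof -
  have sym: "\<And>a b. E a b \<Longrightarrow> E b a" and irr: "\<And>a. \<not> E a a" and fin: "finite V"
    using g unfolding graph_def by blast+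
  have finS: "finite S" using fin SV finite_subset by blast
  define C where "C = {K. K \<subseteq> S \<and> clique E K}"
  have finC: "finite C" unfolding C_def using finS by simp
  have "{} \<in> C" unfolding C_def clique_def by simp
  hence ne: "card ` C \<noteq> {}" by blast
  obtain K where KC: "K \<in> C" and Kmax: "\<And>K'. K' \<in> C \<Longrightarrow> card K' \<le> card K"
  proof -
    have "Max (card ` C) \<in> card ` C" using finC ne by simp
    then obtain K where "K \<in> C" "card K = Max (card ` C)" by auto
    moreover have "\<And>K'. K' \<in> C \<Longrightarrow> card K' \<le> Max (card ` C)" using finC by simp
    ultimately show ?thesis using that by metis
  qed
  have KS: "K \<subseteq> S" and Kc: "clique E K" using KC unfolding C_def by auto
  have finK: "finite K" using KS finS finite_subset by blast
  define nb where "nb x = {k\<in>K. \<not> E x k}" for x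
  have nbne: "nb x \<noteq> {}" if "x \<in> S - K" for x
  proof
    assume "nb x = {}"
    hence "\<forall>k\<in>K. E x k" unfolding nb_def by auto
    hence "insert x K \<in> C" using that KS Kc sym unfolding C_def clique_def by auto
    hence "card (insert x K) \<le> card K" by (rule Kmax)
    thus False using that finK by simp
  qed
  have comp: "nb x \<subseteq> nb y \<or> nb y \<subseteq> nb x" if "x \<in> S - K" "y \<in> S - K" "E x y" for x y
  proof (rule ccontr)
    assume "\<not> ?thesis"
    then obtain kx ky where kx: "kx \<in> nb x" "kx \<notin> nb y" and ky: "ky \<in> nb y" "ky \<notin> nb x" by blast
    have "kx \<in> K" "ky \<in> K" "\<not> E x kx" "\<not> E y ky" "E y kx" "E x ky" using kx ky unfolding nb_def by auto
    moreover have "kx \<noteq> ky" using kx ky by blast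
    ultimately have "E kx ky" using Kc unfolding clique_def by blast
    show False
      by (rule n4[of x y kx ky]) (use that KS \<open>kx \<in> K\<close> \<open>ky \<in> K\<close> \<open>\<not> E x kx\<close> \<open>\<not> E y ky\<close> \<open>E y kx\<close> \<open>E x ky\<close> \<open>E kx ky\<close> sym in auto)
  qed
  have two: "False" if "x \<in> S - K" "y \<in> S - K" "E x y" "k1 \<in> nb x" "k1 \<in> nb y" "k2 \<in> nb x" "k2 \<in> nb y" "k1 \<noteq> k2" for x y k1 k2
  proof -
    have "k1 \<in> K" "k2 \<in> K" "\<not> E x k1" "\<not> E y k1" "\<not> E x k2" "\<not> E y k2" using that unfolding nb_def by auto
    moreover have "E k1 k2" using Kc \<open>k1 \<in> K\<close> \<open>k2 \<in> K\<close> \<open>k1 \<noteq> k2\<close> unfolding clique_def by blast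
    ultimately show False using n2[of x y k1 k2] that KS by auto
  qed
  define R1 where "R1 = {x \<in> S - K. \<exists>k. nb x = {k}}"
  define R2 where "R2 = S - K - R1"
  have "independent E R2" unfolding independent_def
  proof (intro ballI notI)
    fix x y assume xy: "x \<in> R2" "y \<in> R2" "E x y"
    hence xs: "x \<in> S - K" "y \<in> S - K" unfolding R2_def by auto
    have ns: "\<nexists>k. nb z = {k}" if "z \<in> R2" for z using that unfolding R2_def R1_def by auto
    have two': "\<exists>k1 k2. k1 \<in> nb z \<and> k2 \<in> nb z \<and> k1 \<noteq> k2" if "z \<in> R2" for z
    proof -
      have "z \<in> S - K" using that unfolding R2_def by auto
      then obtain k1 where "k1 \<in> nb z" using nbne by blast
      moreover have "nb z \<noteq> {k1}" using ns that by blast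
      ultimately show ?thesis by blast
    qed
    from comp[OF xs xy(3)] show False
    proof
      assume "nb x \<subseteq> nb y"
      then show False using two'[OF xy(1)] two[OF xs xy(3)] by blast
    next
      assume "nb y \<subseteq> nb x"
      then show False using two'[OF xy(2)] two[OF xs xy(3)] by blast
    qed
  qed
  moreover have "independent E R1" unfolding independent_def
  proof (intro ballI notI)
    fix x y assume xy: "x \<in> R1" "y \<in> R1" "E x y"
    then obtain kx ky where xs: "x \<in> S - K" "y \<in> S - K" and kx: "nb x = {kx}" and ky: "nb y = {ky}"
      unfolding R1_def by auto
    have "kx = ky" using comp[OF xs xy(3)] kx ky by auto
    have kK: "kx \<in> K" using kx unfolding nb_def by auto
    have "x \<noteq> y" using xy(3) irr by auto
    have ax: "\<forall>k\<in>K - {kx}. E x k" and ay: "\<forall>k\<in>K - {kx}. E y k"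
      using kx ky \<open>kx = ky\<close> unfolding nb_def by auto
    have "insert x (insert y (K - {kx})) \<in> C"
      using xs KS Kc ax ay xy(3) sym unfolding C_def clique_def by auto
    hence "card (insert x (insert y (K - {kx}))) \<le> card K" by (rule Kmax)
    moreover have "card (insert x (insert y (K - {kx}))) = card K + 1"
      using finK kK xs \<open>x \<noteq> y\<close> by (simp add: card_Diff_singleton)
      (metis Suc_pred card_gt_0_iff empty_iff)
    ultimately show False by simp
  qed
  moreover have "S = K \<union> R1 \<union> R2" using KS unfolding R2_def R1_def by auto
  ultimately show ?thesis using Kc by blast
qed


lemma disj:
  fixes A :: "nat \<Rightarrow> 'a set"
  defines "P \<equiv> \<lambda>i. A i - (\<Union>j\<in>{1..<i}. A j)"
  shows "(\<Union>i\<in>{1..6}. P i) = (\<Union>i\<in>{1..6}. A i)"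
    and "\<forall>i\<in>{1..6}. \<forall>j\<in>{1..6}. i \<noteq> j \<longrightarrow> P i \<inter> P j = {}"
    and "\<And>i. P i \<subseteq> A i"
proof -
  show "\<And>i. P i \<subseteq> A i" unfolding P_def by auto
  show "(\<Union>i\<in>{1..6}. P i) = (\<Union>i\<in>{1..6}. A i)"
  proof
    show "(\<Union>i\<in>{1..6}. P i) \<subseteq> (\<Union>i\<in>{1..6}. A i)" unfolding P_def by auto
    show "(\<Union>i\<in>{1..6}. A i) \<subseteq> (\<Union>i\<in>{1..6}. P i)"
    proof
      fix x assume "x \<in> (\<Union>i\<in>{1..6}. A i)"
      then have ex: "\<exists>i. i \<in> {1..6} \<and> x \<in> A i" by blast
      define m where "m = (LEAST i. i \<in> {1..6} \<and> x \<in> A i)"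
      have m: "m \<in> {1..6} \<and> x \<in> A m" unfolding m_def using LeastI_ex[OF ex] .
      have "\<And>j. j \<in> {1..<m} \<Longrightarrow> x \<notin> A j"
        using m not_less_Least unfolding m_def by fastforce
      then have "x \<in> P m" using m unfolding P_def by blast
      thus "x \<in> (\<Union>i\<in>{1..6}. P i)" using m by blast
    qed
  qed
  show "\<forall>i\<in>{1..6}. \<forall>j\<in>{1..6}. i \<noteq> j \<longrightarrow> P i \<inter> P j = {}"
  proof (intro ballI impI)
    fix i j :: nat assume "i \<in> {1..6}" "j \<in> {1..6}" "i \<noteq> j"
    then consider "i < j" | "j < i" by linarith
    then show "P i \<inter> P j = {}"
    proof cases
      case 1
      then have "i \<in> {1..<j}" using \<open>i \<in> {1..6}\<close> by simp
      then have "A i \<subseteq> (\<Union>k\<in>{1..<j}. A k)" by blast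
      then show ?thesis unfolding P_def by blast
    next
      case 2
      then have "j \<in> {1..<i}" using \<open>j \<in> {1..6}\<close> by simp
      then have "A j \<subseteq> (\<Union>k\<in>{1..<i}. A k)" by blast
      then show ?thesis unfolding P_def by blast
    qed
  qed
qed

theorem theorem3p3:
  fixes V :: "'a set" and E :: "'a \<Rightarrow> 'a \<Rightarrow> bool"
  assumes "graph V E" and "connected_graph V E"
    and "\<not> has_induced twoK2_V twoK2_E V E"
    and "\<not> has_induced W4_V W4_E V E"
  shows "pseudo_split V E \<or>
    (\<exists>P :: nat \<Rightarrow> 'a set.
        (\<Union>i\<in>{1..6}. P i) = V
      \<and> (\<forall>i\<in>{1..6}. \<forall>j\<in>{1..6}. i \<noteq> j \<longrightarrow> P i \<inter> P j = {})
      \<and> (\<forall>i\<in>{2..6}. independent E (P i))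
      \<and> ((pseudo_split (P 1) (induced_edges E (P 1))
            \<and> clique_number (P 1) (induced_edges E (P 1)) \<le> clique_number V E - 1
            \<and> P 5 = {} \<and> P 6 = {})
         \<or> bipartite (P 1) (complement (P 1) (induced_edges E (P 1)))))"
proof -
  note g = assms(1)
  have sym: "\<And>a b. E a b \<Longrightarrow> E b a" and irr: "\<And>a. \<not> E a a"
    and inV: "\<And>a b. E a b \<Longrightarrow> a \<in> V \<and> b \<in> V"
    using g unfolding graph_def by blast+
  have nb3: "\<exists>K I J. {x. E c x} = K \<union> I \<union> J \<and> clique E K \<and> independent E I \<and> independent E J"
    if "c \<in> V" for c
  proof (rule cover3[OF g])
    show "{x. E c x} \<subseteq> V" using inV by blast
    show False if "x\<in>{x. E c x}" "y\<in>{x. E c x}" "z\<in>{x. E c x}" "w\<in>{x. E c x}" "E x y" "E z w"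
      "\<not> E x z" "\<not> E x w" "\<not> E y z" "\<not> E y w" for x y z w
      using no2K2[OF g assms(3), of x y z w] that inV by blast
    show False if "x\<in>{x. E c x}" "y\<in>{x. E c x}" "z\<in>{x. E c x}" "w\<in>{x. E c x}" "E x y" "E y z" "E z w" "E w x"
      "\<not> E x z" "\<not> E y w" "x \<noteq> z" "y \<noteq> w" for x y z w
      using noW4[OF g assms(4), of x y z w c] that inV by blast
  qed
  have main: "\<exists>A :: nat \<Rightarrow> 'a set. (\<Union>i\<in>{1..6}. A i) = V \<and> (\<forall>i\<in>{2..6}. independent E (A i))
      \<and> (\<exists>K1 K2. A 1 = K1 \<union> K2 \<and> clique E K1 \<and> clique E K2)"
  proof (cases "\<exists>a b. E a b")
    case False
    define A where "A = (\<lambda>i::nat. if i = 2 then V else {})"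
    have "(\<Union>i\<in>{1..6}. A i) = V" unfolding A_def by force
    moreover have "\<forall>i\<in>{2..6}. independent E (A i)" using False unfolding A_def independent_def by auto
    moreover have "A 1 = {} \<union> {} \<and> clique E {} \<and> clique E {}" unfolding A_def clique_def by auto
    ultimately show ?thesis by (intro exI[of _ A]) blast
  next
    case True
    then obtain a b where ab: "E a b" by blast
    obtain K1 I1 J1 where 1: "{x. E a x} = K1 \<union> I1 \<union> J1" "clique E K1" "independent E I1" "independent E J1"
      using nb3[of a] inV[OF ab] by blast
    obtain K2 I2 J2 where 2: "{x. E b x} = K2 \<union> I2 \<union> J2" "clique E K2" "independent E I2" "independent E J2"
      using nb3[of b] inV[OF ab] by blast
    define I where "I = V - {x. E a x} - {x. E b x}"
    have "independent E I" unfolding independent_def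
    proof (intro ballI notI)
      fix x y assume "x \<in> I" "y \<in> I" "E x y"
      then show False using no2K2[OF g assms(3), of x y a b] ab inV sym unfolding I_def by blast
    qed
    define A where "A = (\<lambda>i::nat. if i = 1 then K1 \<union> K2 else if i = 2 then I1 else if i = 3 then J1
        else if i = 4 then I2 else if i = 5 then J2 else I)"
    have eq: "{1..6::nat} = {1,2,3,4,5,6}" by auto
    have "(\<Union>i\<in>{1..6}. A i) = K1 \<union> K2 \<union> I1 \<union> J1 \<union> I2 \<union> J2 \<union> I" unfolding eq A_def by auto
    also have "\<dots> = V" using 1(1) 2(1) inV unfolding I_def by blast
    finally have "(\<Union>i\<in>{1..6}. A i) = V" .
    moreover have "\<forall>i\<in>{2..6}. independent E (A i)"
    proof
      fix i :: nat assume "i \<in> {2..6}"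
      then have "i = 2 \<or> i = 3 \<or> i = 4 \<or> i = 5 \<or> i = 6" by auto
      then show "independent E (A i)" using 1 2 \<open>independent E I\<close> unfolding A_def by auto
    qed
    moreover have "A 1 = K1 \<union> K2" unfolding A_def by simp
    ultimately show ?thesis using 1(2) 2(2) by (intro exI[of _ A]) blast
  qed
  then obtain A :: "nat \<Rightarrow> 'a set" and K1 K2 where A: "(\<Union>i\<in>{1..6}. A i) = V" "\<forall>i\<in>{2..6}. independent E (A i)"
    "A 1 = K1 \<union> K2" "clique E K1" "clique E K2" by blast
  define P where "P = (\<lambda>i. A i - (\<Union>j\<in>{1..<i}. A j))"
  have u: "(\<Union>i\<in>{1..6}. P i) = V" using disj(1)[of A] A(1) unfolding P_def by simp
  have dis: "\<forall>i\<in>{1..6}. \<forall>j\<in>{1..6}. i \<noteq> j \<longrightarrow> P i \<inter> P j = {}"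
    unfolding P_def by (rule disj(2))
  have ind: "\<forall>i\<in>{2..6}. independent E (P i)"
    using A(2) unfolding independent_def P_def by blast
  have bp: "bipartite (P 1) (complement (P 1) (induced_edges E (P 1)))"
  proof -
    have P1: "P 1 = K1 \<union> K2" unfolding P_def using A(3) by simp
    show ?thesis unfolding bipartite_def P1
      by (rule exI[of _ K1], rule exI[of _ "K2 - K1"])
        (use A(4,5) in \<open>auto simp: independent_def complement_def induced_edges_def clique_def\<close>)
  qed
  show ?thesis
    apply (rule disjI2)
    apply (rule exI[of _ P])
    apply (intro conjI)
       apply (rule u)
      apply (rule dis)
     apply (rule ind)
    apply (rule disjI2)
    apply (rule bp)
    done
qed

end
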